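(* Let $\alpha=\tfrac12$, $K>0$, and let $\{\mu_n\}_{n\in\mathbb N}$ and $\mu$ be in $\mathcal P(\mathbb T\times\mathbb R)$ with $\mu_n\to\mu$ narrowly. Then $$\lim_{n\to\infty}\sup_{\Omega\in\mathbb R}|\mathcal V[\mu_n](z,\Omega)-\mathcal V[\mu](z,\Omega)|=0$$ for every $z\in\mathbb T$ which is a continuity point of the marginal $(\pi_z)_\#\mu$ (i.e. $(\pi_z)_\#\mu(\{z\})=0$). In particular this holds for almost every $z\in\mathbb T$.
   Context: $\mathbb T$ is the unit circle identified with $(-\pi,\pi]$ via $z=e^{i\theta}$; $|\theta|_o$ = absolute value of the representative of $\theta$ mod $2\pi$ in $(-\pi,\pi]$; $\pi_z(z,\Omega)=z$. Critical kernel $h(\theta)=\sin\theta/|\theta|_o$, $\theta\notin2\pi\mathbb Z$. For a finite measure $\mu$: $\mathcal P[\mu](\theta,\Omega)=\Omega-K\int_{(\mathbb T\setminus\{e^{i\theta}\})\times\mathbb R}h(\theta-\theta')\,d\mu(\theta',\Omega')$ and $\mathcal V[\mu](z,\Omega)=(\mathcal P[\mu](z,\Omega)\,iz,0)$, a tangent vector to $\mathbb T\times\mathbb R$ at $(z,\Omega)$, whose norm is taken in the product Riemannian metric. Narrow convergence means convergence against all bounded continuous functions. *)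

theory Defs
  imports "HOL-Probability.Probability"
begin

text \<open>The circle T is the unit circle in the complex plane; points of T x R are
  pairs (z, Omega) :: complex \<times> real.  Angles: z = cis theta.\<close>

definition circ :: "complex set" where
  "circ = sphere 0 1"

text \<open>|theta|_o : absolute value of the representative of theta mod 2 pi in (-pi, pi].\<close>
definition abs_o :: "real \<Rightarrow> real" where
  "abs_o \<theta> = \<bar>\<theta> - 2 * pi * of_int \<lceil>(\<theta> - pi) / (2 * pi)\<rceil>\<bar>"

text \<open>Critical kernel (alpha = 1/2).\<close>
definition hker :: "real \<Rightarrow> real" where
  "hker \<theta> = sin \<theta> / abs_o \<theta>"

text \<open>P[mu](theta, Omega), with theta the angle of z = cis theta (Arg gives the
  angle in (-pi, pi]); the integral is over (T minus {z}) x R.\<close>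
definition Pfield :: "real \<Rightarrow> (complex \<times> real) measure \<Rightarrow> complex \<Rightarrow> real \<Rightarrow> real" where
  "Pfield K \<mu> z \<Omega> =
     \<Omega> - K * (LINT x : {x. fst x \<noteq> z} | \<mu>. hker (Arg z - Arg (fst x)))"

text \<open>V[mu](z, Omega) = (P[mu](z,Omega) i z, 0), a tangent vector to T x R at (z,Omega),
  viewed in the ambient space C x R (product Euclidean norm = product Riemannian metric).\<close>
definition Vfield :: "real \<Rightarrow> (complex \<times> real) measure \<Rightarrow> complex \<Rightarrow> real \<Rightarrow> complex \<times> real" where
  "Vfield K \<mu> z \<Omega> = (complex_of_real (Pfield K \<mu> z \<Omega>) * (\<i> * z), 0)"

definition prob_TR :: "(complex \<times> real) measure \<Rightarrow> bool" where
  "prob_TR \<mu> \<longleftrightarrow> prob_space \<mu> \<and> sets \<mu> = sets borel \<and> \<mu> (circ \<times> UNIV) = 1"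

definition narrow_conv :: "(nat \<Rightarrow> (complex \<times> real) measure) \<Rightarrow> (complex \<times> real) measure \<Rightarrow> bool" where
  "narrow_conv \<mu>s \<mu> \<longleftrightarrow>
     (\<forall>f :: complex \<times> real \<Rightarrow> real. continuous_on UNIV f \<and> bounded (range f) \<longrightarrow>
        (\<lambda>n. integral\<^sup>L (\<mu>s n) f) \<longlonglongrightarrow> integral\<^sup>L \<mu> f)"

end

theory Submission
  imports Defs
begin


lemma hker_eq: "hker a = sin a / arccos (cos a)"
proof -
  define k where "k = \<lceil>(a - pi) / (2 * pi)\<rceil>"
  define r where "r = a - 2 * pi * of_int k"
  have k1: "(a - pi) / (2*pi) \<le> of_int k" unfolding k_def by (rule le_of_int_ceiling)
  have k2: "of_int k < (a - pi) / (2*pi) + 1" unfolding k_def using ceiling_correct[of "(a-pi)/(2*pi)"] by linarith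
  have "a - pi \<le> 2 * pi * of_int k" using k1 pi_gt_zero by (simp add: divide_le_eq mult.commute)
  moreover have "2 * pi * of_int k < a + pi" using k2 pi_gt_zero
    by (simp add: less_divide_eq field_simps)
  ultimately have rb: "\<bar>r\<bar> \<le> pi" unfolding r_def by auto
  have "abs_o a = \<bar>r\<bar>" unfolding abs_o_def r_def k_def by simp
  moreover have "cos a = cos r"
    unfolding r_def by (simp add: cos_diff)
  ultimately have "abs_o a = arccos (cos a)" using arccos_cos_eq_abs[OF rb] by simp
  then show ?thesis unfolding hker_def by simp
qed

lemma hker_bound: "\<bar>hker a\<bar> \<le> 1"
proof -
  obtain k where k: "arccos (cos a) = \<bar>a - of_int k * (2 * pi)\<bar>"
    using arccos_cos_eq_abs_2pi by blast
  have s0: "sin (of_int k * (2 * pi)) = 0" "cos (of_int k * (2 * pi)) = 1"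
    by (metis mult.commute sin_int_2pin, metis mult.commute cos_int_2pin)
  have "sin a = sin (a - of_int k * (2 * pi))"
    by (simp only: sin_diff s0)
  then have "\<bar>sin a\<bar> \<le> arccos (cos a)" using k abs_sin_x_le_abs_x by simp
  then show ?thesis unfolding hker_eq
    by (metis abs_divide abs_ge_zero abs_of_nonneg div_by_0 divide_le_eq_1 order.trans
        zero_le_one less_eq_real_def)
qed

lemma hker_zero: "hker 0 = 0" by (simp add: hker_def)

definition ac :: "real \<Rightarrow> real" where "ac y = arccos (max (-1) (min 1 y))"

lemma ac_cont: "continuous_on UNIV ac"
proof -
  have "continuous_on UNIV (\<lambda>y. max (-1) (min 1 y) :: real)" by (intro continuous_intros)
  moreover have "(\<lambda>y. max (-1) (min 1 y) :: real) ` UNIV \<subseteq> {-1..1}" by auto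
  ultimately show ?thesis unfolding ac_def
    using continuous_on_compose[of UNIV "\<lambda>y. max (-1) (min 1 y) :: real" arccos]
      continuous_on_subset[OF continuous_on_arccos'] by (simp add: comp_def)
qed

lemma ac_meas[measurable]: "ac \<in> borel_measurable borel"
  by (rule borel_measurable_continuous_onI[OF ac_cont])

lemma ac_eq: "\<bar>y\<bar> \<le> 1 \<Longrightarrow> ac y = arccos y"
proof -
  assume "\<bar>y\<bar> \<le> 1"
  then have "max (-1) (min 1 y) = y" by auto
  then show ?thesis unfolding ac_def by simp
qed

definition psi :: "complex \<Rightarrow> complex \<Rightarrow> real" where
  "psi z w = - Im (w * cnj z / of_real (norm w)) / ac (Re (w * cnj z / of_real (norm w)))"

lemma psi_meas[measurable]: "psi z \<in> borel_measurable borel"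
  unfolding psi_def by measurable

lemma psi_eq:
  assumes z: "norm z = 1" and w: "w \<noteq> 0"
  shows "hker (Arg z - Arg w) = psi z w"
proof -
  have z0: "z \<noteq> 0" using z by auto
  have "w / of_real (norm w) = sgn w" by (simp add: sgn_div_norm scaleR_conv_of_real field_simps)
  then have "w / of_real (norm w) = cis (Arg w)" using cis_Arg[OF w] by simp
  moreover have "cnj z = cis (- Arg z)"
  proof -
    have "z = cis (Arg z)" using cis_Arg[OF z0] z by (simp add: sgn_div_norm)
    then have "cnj z = cnj (cis (Arg z))" by simp
    then show ?thesis by (simp add: cis_cnj)
  qed
  ultimately have u: "w * cnj z / of_real (norm w) = cis (Arg w - Arg z)"
    by (metis (no_types, lifting) cis_mult diff_conv_add_uminus times_divide_eq_left mult.commute)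
  have c: "cos (Arg w - Arg z) = cos (Arg z - Arg w)" by (metis cos_minus minus_diff_eq)
  have s: "sin (Arg w - Arg z) = - sin (Arg z - Arg w)" by (metis sin_minus minus_diff_eq)
  show ?thesis unfolding psi_def u hker_eq
    by (simp add: c s ac_eq abs_cos_le_one)
qed

lemma isCont_ac: "isCont ac y"
  using ac_cont continuous_on_eq_continuous_at open_UNIV by blast

lemma cont_ac[continuous_intros]: "continuous F f \<Longrightarrow> continuous F (\<lambda>x. ac (f x))"
  unfolding continuous_def by (rule isCont_tendsto_compose[OF isCont_ac])

lemma norm_u: "norm z = 1 \<Longrightarrow> w \<noteq> 0 \<Longrightarrow> norm (w * cnj z / of_real (norm w)) = 1"
  by (simp add: norm_mult norm_divide)

lemma psi_bound: assumes z: "norm z = 1" shows "\<bar>psi z w\<bar> \<le> 1"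
proof (cases "w = 0")
  case True then show ?thesis by (simp add: psi_def)
next
  case False
  have "psi z w = hker (Arg z - Arg w)" using psi_eq[OF z False] by simp
  then show ?thesis using hker_bound[of "Arg z - Arg w"] by simp
qed

lemma abs_in_11: "\<bar>y::real\<bar> \<le> 1 \<Longrightarrow> y \<in> {-1..1}" by auto

lemma psi_cont:
  assumes z: "norm z = 1" and w: "w \<noteq> 0" and r: "Re (w * cnj z / of_real (norm w)) < 1"
  shows "isCont (psi z) w"
proof -
  let ?u = "w * cnj z / of_real (norm w)"
  have "\<bar>Re ?u\<bar> \<le> 1" using abs_Re_le_cmod[of ?u] norm_u[OF z w] by simp
  then have e: "ac (Re ?u) = arccos (Re ?u)" by (rule ac_eq)
  have "Re ?u \<in> {-1..1}" using abs_in_11[OF \<open>\<bar>Re ?u\<bar> \<le> 1\<close>] .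
  moreover have "Re ?u \<noteq> 1" using r by (rule less_imp_neq)
  ultimately have "arccos (Re ?u) \<noteq> 0" using arccos_eq_0_iff by blast
  then have "ac (Re ?u) \<noteq> 0" using e by simp
  then show ?thesis unfolding psi_def using w
    by (intro continuous_intros) auto
qed

definition phi :: "real \<Rightarrow> complex \<Rightarrow> complex \<times> real \<Rightarrow> real" where
  "phi d z x = min 1 (max 0 (2 - norm (fst x - z) / d))"
definition chi :: "real \<Rightarrow> complex \<times> real \<Rightarrow> real" where
  "chi d x = max 0 (1 - 2 * \<bar>norm (fst x) - 1\<bar> / d)"
definition gg :: "real \<Rightarrow> complex \<Rightarrow> complex \<times> real \<Rightarrow> real" where
  "gg d z x = chi d x * (1 - phi d z x) * psi z (fst x)"

lemma phi_cont: "d \<noteq> 0 \<Longrightarrow> continuous_on UNIV (phi d z)"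
  unfolding phi_def by (intro continuous_intros) auto

lemma gg_cont:
  assumes d: "0 < d" "d \<le> 1" and z: "norm z = 1"
  shows "continuous_on UNIV (gg d z)"
proof -
  define c where "c x = chi d x * (1 - phi d z x)" for x
  have cc: "isCont c p" for p unfolding c_def chi_def phi_def using d by (intro continuous_intros) auto
  have "isCont (gg d z) p" for p
  proof (cases "c p = 0")
    case True
    have lim: "((\<lambda>x. \<bar>c x\<bar>) \<longlongrightarrow> 0) (at p)"
      using cc[of p] True unfolding isCont_def by (metis abs_zero tendsto_rabs)
    have bnd: "norm (gg d z x) \<le> \<bar>c x\<bar>" for x
    proof -
      have "gg d z x = c x * psi z (fst x)" by (simp add: gg_def c_def)
      then have "norm (gg d z x) = \<bar>c x\<bar> * \<bar>psi z (fst x)\<bar>" by (simp add: abs_mult)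
      also have "\<dots> \<le> \<bar>c x\<bar> * 1" by (rule mult_left_mono[OF psi_bound[OF z] abs_ge_zero])
      finally show ?thesis by simp
    qed
    have "(gg d z \<longlongrightarrow> 0) (at p)"
      by (rule Lim_null_comparison[OF always_eventually[OF allI[OF bnd]] lim])
    moreover have "gg d z p = 0" using True unfolding gg_def c_def by simp
    ultimately show ?thesis unfolding isCont_def by simp
  next
    case False
    obtain w t where p: "p = (w, t)" by (cases p)
    have cp0: "chi d p \<noteq> 0" and pp0: "1 - phi d z p \<noteq> 0" using False unfolding c_def by auto
    have a1: "1 - 2 * \<bar>norm w - 1\<bar> / d > 0"
      using cp0 unfolding chi_def p by (metis fst_conv max_def order_le_less)
    then have "2 * \<bar>norm w - 1\<bar> / d < 1" by linarith
    then have "2 * \<bar>norm w - 1\<bar> < d" using d by (simp add: divide_less_eq)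
    then have h1: "\<bar>norm w - 1\<bar> < d / 2" by (simp add: field_simps)
    have "max 0 (2 - norm (w - z) / d) < 1"
      using pp0 unfolding phi_def p by (metis fst_conv min_def not_less eq_iff_diff_eq_0)
    then have "2 - norm (w - z) / d < 1" by linarith
    then have "1 < norm (w - z) / d" by linarith
    then have h2: "norm (w - z) > d" using d by (simp add: less_divide_eq)
    have w0: "w \<noteq> 0" using h1 d by auto
    define u where "u = w * cnj z / of_real (norm w)"
    have nu: "norm u = 1" unfolding u_def by (rule norm_u[OF z w0])
    have "Re u < 1"
    proof (rule ccontr)
      assume "\<not> Re u < 1"
      moreover have "\<bar>Re u\<bar> \<le> 1" using abs_Re_le_cmod[of u] nu by simp
      ultimately have re: "Re u = 1" using abs_le_D1 not_less order_antisym by metis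
      have "(Re u)\<^sup>2 + (Im u)\<^sup>2 = 1" using nu by (simp add: cmod_def)
      then have "Im u = 0" using re by simp
      then have "u = 1" using re by (simp add: complex_eq_iff)
      then have "w * cnj z = of_real (norm w)" using w0 unfolding u_def by (simp add: field_simps)
      then have "w * (cnj z * z) = of_real (norm w) * z" by (metis mult.assoc)
      moreover have "cnj z * z = 1" using z by (metis complex_norm_square mult.commute of_real_1 power_one)
      ultimately have "w = of_real (norm w) * z" by simp
      then have "w - z = of_real (norm w - 1) * z" by (simp add: algebra_simps)
      then have "norm (w - z) = norm (of_real (norm w - 1) :: complex) * norm z" by (simp only: norm_mult)
      then have "norm (w - z) = \<bar>norm w - 1\<bar>" using z by (simp only: norm_of_real mult_1_right)
      then show False using h1 h2 d by simp
    qed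
    have "isCont (\<lambda>x. psi z (fst x)) p"
      using psi_cont[OF z w0 \<open>Re u < 1\<close>[unfolded u_def]] p by (intro isCont_o2[OF isCont_fst]) auto
    then have "isCont (\<lambda>x. c x * psi z (fst x)) p" using cc by (intro continuous_intros)
    then show ?thesis unfolding gg_def c_def by (simp add: mult.assoc)
  qed
  then show ?thesis using continuous_on_eq_continuous_at open_UNIV by blast
qed



lemma prob_TR_D:
  assumes "prob_TR M"
  shows "prob_space M" "sets M = sets borel" "space M = UNIV" "AE x in M. x \<in> circ \<times> UNIV"
    "\<And>f. f \<in> borel_measurable borel \<Longrightarrow> f \<in> borel_measurable M"
proof -
  show p: "prob_space M" and s: "sets M = sets borel" using assms unfolding prob_TR_def by auto
  show "space M = UNIV" using sets_eq_imp_space_eq[OF s] by simp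
  have "emeasure M (circ \<times> UNIV) = 1" using assms unfolding prob_TR_def by auto
  then have "measure M (circ \<times> UNIV) = 1" by (simp add: measure_def)
  then show "AE x in M. x \<in> circ \<times> UNIV" using prob_space.AE_prob_1[OF p] by blast
  show "f \<in> borel_measurable M" if "f \<in> borel_measurable borel" for f :: "complex \<times> real \<Rightarrow> 'b::topological_space"
    using that measurable_cong_sets[OF s refl] by blast
qed

lemma integrable_bnd:
  assumes "prob_TR M" "f \<in> borel_measurable borel" "\<And>x. \<bar>f x\<bar> \<le> B"
  shows "integrable M (f :: _ \<Rightarrow> real)"
proof -
  interpret prob_space M using prob_TR_D[OF assms(1)] by simp
  show ?thesis using assms prob_TR_D[OF assms(1)]
    by (intro integrable_const_bound[where B=B]) auto
qed

lemma cont_bnd_facts: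
  assumes "continuous_on UNIV g" "bounded (range (g :: complex \<times> real \<Rightarrow> real))"
  shows "g \<in> borel_measurable borel" "\<exists>B. \<forall>x. \<bar>g x\<bar> \<le> B"
  using assms borel_measurable_continuous_onI by (auto simp: bounded_iff)

lemma int_approx_bound:
  fixes f g ph :: "complex \<times> real \<Rightarrow> real"
  assumes M: "prob_TR M" and fm: "f \<in> borel_measurable borel" and fb: "\<And>x. \<bar>f x\<bar> \<le> B"
    and g: "continuous_on UNIV g" "bounded (range g)"
    and ph: "continuous_on UNIV ph" "bounded (range ph)"
    and le: "\<And>x. x \<in> circ \<times> UNIV \<Longrightarrow> \<bar>f x - g x\<bar> \<le> ph x"
  shows "\<bar>integral\<^sup>L M f - integral\<^sup>L M g\<bar> \<le> integral\<^sup>L M ph"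
proof -
  obtain Bg where Bg: "\<And>x. \<bar>g x\<bar> \<le> Bg" using cont_bnd_facts[OF g] by blast
  obtain Bp where Bp: "\<And>x. \<bar>ph x\<bar> \<le> Bp" using cont_bnd_facts[OF ph] by blast
  have ig: "integrable M g" by (rule integrable_bnd[OF M cont_bnd_facts(1)[OF g] Bg])
  have ip: "integrable M ph" by (rule integrable_bnd[OF M cont_bnd_facts(1)[OF ph] Bp])
  have iF: "integrable M f" by (rule integrable_bnd[OF M fm fb])
  have "integral\<^sup>L M f - integral\<^sup>L M g = integral\<^sup>L M (\<lambda>x. f x - g x)"
    using iF ig by simp
  also have "\<bar>\<dots>\<bar> \<le> integral\<^sup>L M (\<lambda>x. norm (f x - g x))"
    using integral_norm_bound[of M "\<lambda>x. f x - g x"] by simp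
  also have "\<dots> \<le> integral\<^sup>L M ph"
  proof (rule integral_mono_AE)
    show "integrable M (\<lambda>x. norm (f x - g x))" using iF ig by auto
    show "integrable M ph" by (rule ip)
    show "AE x in M. norm (f x - g x) \<le> ph x"
      using prob_TR_D(4)[OF M] by eventually_elim (use le in auto)
  qed
  finally show ?thesis .
qed

lemma conv_of_approx:
  fixes f :: "complex \<times> real \<Rightarrow> real"
  assumes P: "\<And>n. prob_TR (\<mu>s n)" "prob_TR \<mu>" and N: "narrow_conv \<mu>s \<mu>"
    and fm: "f \<in> borel_measurable borel" and fb: "\<And>x. \<bar>f x\<bar> \<le> B"
    and approx: "\<And>e. e > 0 \<Longrightarrow> \<exists>g ph. continuous_on UNIV g \<and> bounded (range g) \<and>
        continuous_on UNIV ph \<and> bounded (range ph) \<and>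
        (\<forall>x\<in>circ \<times> UNIV. \<bar>f x - g x\<bar> \<le> ph x) \<and> integral\<^sup>L \<mu> ph < e"
  shows "(\<lambda>n. integral\<^sup>L (\<mu>s n) f) \<longlonglongrightarrow> integral\<^sup>L \<mu> f"
proof (rule tendstoI)
  fix r :: real assume r: "r > 0"
  obtain g ph where g: "continuous_on UNIV g" "bounded (range g)"
    and ph: "continuous_on UNIV ph" "bounded (range ph)"
    and le: "\<forall>x\<in>circ \<times> UNIV. \<bar>f x - g x\<bar> \<le> ph x" and small: "integral\<^sup>L \<mu> ph < r / 4"
    using approx[of "r/4"] r by auto
  have cg: "(\<lambda>n. integral\<^sup>L (\<mu>s n) g) \<longlonglongrightarrow> integral\<^sup>L \<mu> g"
    using N g unfolding narrow_conv_def by blast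
  have cp: "(\<lambda>n. integral\<^sup>L (\<mu>s n) ph) \<longlonglongrightarrow> integral\<^sup>L \<mu> ph"
    using N ph unfolding narrow_conv_def by blast
  have "eventually (\<lambda>n. dist (integral\<^sup>L (\<mu>s n) g) (integral\<^sup>L \<mu> g) < r/4) sequentially"
    by (rule tendstoD[OF cg]) (use r in simp)
  moreover have "eventually (\<lambda>n. dist (integral\<^sup>L (\<mu>s n) ph) (integral\<^sup>L \<mu> ph) < r/4) sequentially"
    by (rule tendstoD[OF cp]) (use r in simp)
  ultimately show "eventually (\<lambda>n. dist (integral\<^sup>L (\<mu>s n) f) (integral\<^sup>L \<mu> f) < r) sequentially"
  proof eventually_elim
    case (elim n)
    have a: "\<bar>integral\<^sup>L (\<mu>s n) f - integral\<^sup>L (\<mu>s n) g\<bar> \<le> integral\<^sup>L (\<mu>s n) ph"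
      by (rule int_approx_bound[OF P(1) fm fb g ph]) (use le in auto)
    have b: "\<bar>integral\<^sup>L \<mu> f - integral\<^sup>L \<mu> g\<bar> \<le> integral\<^sup>L \<mu> ph"
      by (rule int_approx_bound[OF P(2) fm fb g ph]) (use le in auto)
    show ?case unfolding dist_real_def using a b elim[unfolded dist_real_def] small by linarith
  qed
qed

definition FF :: "complex \<Rightarrow> complex \<times> real \<Rightarrow> real" where
  "FF z x = hker (Arg z - Arg (fst x))"

lemma FF_alt: "norm z = 1 \<Longrightarrow> FF z x = (if fst x = 0 then hker (Arg z) else psi z (fst x))"
  unfolding FF_def using psi_eq by (auto simp: Arg_zero)

lemma FF_meas: assumes "norm z = 1" shows "FF z \<in> borel_measurable borel"
proof -
  have eq1: "FF z = (\<lambda>x. if fst x = 0 then hker (Arg z) else psi z (fst x))"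
    using FF_alt[OF assms] by auto
  have im: "(\<lambda>w. if w \<in> {0} then hker (Arg z) else psi z w) \<in> borel_measurable borel"
    by (rule measurable_If_set) (auto intro: psi_meas)
  have fm: "(fst :: complex \<times> real \<Rightarrow> complex) \<in> borel_measurable borel"
    by (intro borel_measurable_continuous_onI continuous_intros)
  have "(\<lambda>x::complex \<times> real. if fst x \<in> {0} then hker (Arg z) else psi z (fst x)) \<in> borel_measurable borel"
    using measurable_compose[OF fm im] .
  then have "(\<lambda>x::complex \<times> real. if fst x = 0 then hker (Arg z) else psi z (fst x)) \<in> borel_measurable borel"
    by simp
  then show ?thesis using eq1 by simp
qed

lemma FF_bound: "\<bar>FF z x\<bar> \<le> 1" unfolding FF_def by (rule hker_bound)

lemma phi_bound: "0 \<le> phi d z x" "phi d z x \<le> 1" unfolding phi_def by auto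

lemma phi_int_small:
  assumes M: "prob_TR \<mu>" and z0: "measure \<mu> ({z} \<times> UNIV) = 0" and e: "e > 0"
  shows "\<exists>d. 0 < d \<and> d \<le> 1 \<and> integral\<^sup>L \<mu> (phi d z) < e"
proof -
  interpret prob_space \<mu> using prob_TR_D[OF M] by simp
  define s where "s m = phi (1 / (real m + 1)) z" for m
  have cl: "{z} \<times> (UNIV :: real set) \<in> sets borel" by (intro borel_closed closed_Times) auto
  have "(\<lambda>m. integral\<^sup>L \<mu> (s m)) \<longlonglongrightarrow> integral\<^sup>L \<mu> (indicator ({z} \<times> UNIV) :: _ \<Rightarrow> real)"
  proof (rule integral_dominated_convergence[where w="\<lambda>_. 1"])
    show "indicator ({z} \<times> UNIV) \<in> borel_measurable \<mu>"
      using cl prob_TR_D(2)[OF M] by (intro borel_measurable_indicator) auto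
    show "s m \<in> borel_measurable \<mu>" for m
      unfolding s_def by (intro prob_TR_D(5)[OF M] borel_measurable_continuous_onI phi_cont) simp
    show "integrable \<mu> (\<lambda>_. 1::real)" by simp
    show "AE x in \<mu>. norm (s m x) \<le> 1" for m
      using phi_bound unfolding s_def by (intro AE_I2) (simp add: abs_le_iff)
    show "AE x in \<mu>. (\<lambda>m. s m x) \<longlonglongrightarrow> indicator ({z} \<times> UNIV) x"
    proof (intro AE_I2)
      fix x :: "complex \<times> real"
      show "(\<lambda>m. s m x) \<longlonglongrightarrow> indicator ({z} \<times> UNIV) x"
      proof (cases "fst x = z")
        case True
        then have "s m x = 1" for m unfolding s_def phi_def by simp
        moreover have "indicator ({z} \<times> UNIV) x = (1::real)" using True by (cases x) auto
        ultimately show ?thesis by simp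
      next
        case False
        define d0 where "d0 = norm (fst x - z)"
        have d0: "d0 > 0" using False unfolding d0_def by simp
        have "eventually (\<lambda>m. s m x = 0) sequentially"
          unfolding eventually_sequentially
        proof (intro exI allI impI)
          fix m assume "nat \<lceil>2 / d0\<rceil> \<le> m"
          then have "2 / d0 \<le> real m" by linarith
          then have "2 \<le> real m * d0" using d0 by (simp add: divide_le_eq)
          then have "2 \<le> (real m + 1) * d0" using d0 by (simp add: algebra_simps)
          then have "2 - d0 / (1 / (real m + 1)) \<le> 0" by (simp add: mult.commute)
          then show "s m x = 0" unfolding s_def phi_def d0_def[symmetric] by simp
        qed
        then have "(\<lambda>m. s m x) \<longlonglongrightarrow> 0" by (rule tendsto_eventually)
        moreover have "indicator ({z} \<times> UNIV) x = (0::real)" using False by (cases x) auto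
        ultimately show ?thesis by simp
      qed
    qed
  qed
  moreover have "integral\<^sup>L \<mu> (indicator ({z} \<times> UNIV) :: _ \<Rightarrow> real) = 0"
    using z0 prob_TR_D(3)[OF M] by simp
  ultimately have "(\<lambda>m. integral\<^sup>L \<mu> (s m)) \<longlonglongrightarrow> 0" by simp
  then have "eventually (\<lambda>m. integral\<^sup>L \<mu> (s m) < e) sequentially"
    using e by (rule order_tendstoD(2))
  then obtain m where "integral\<^sup>L \<mu> (s m) < e" by (meson eventually_sequentially order_refl)
  moreover have "0 < 1 / (real m + 1)" "1 / (real m + 1) \<le> 1" by (auto simp: field_simps)
  ultimately show ?thesis unfolding s_def by blast
qed

lemma chi_bound: "0 < d \<Longrightarrow> 0 \<le> chi d x \<and> chi d x \<le> 1"
proof -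
  assume d: "0 < d"
  have "0 \<le> 2 * \<bar>norm (fst x) - 1\<bar> / d" using d by simp
  then show ?thesis unfolding chi_def by auto
qed

lemma gg_bound: assumes z: "norm z = 1" and d: "0 < d" shows "\<bar>gg d z x\<bar> \<le> 1"
proof -
  have a: "\<bar>chi d x\<bar> \<le> 1" using chi_bound[OF d, of x] by auto
  have b: "\<bar>1 - phi d z x\<bar> \<le> 1" using phi_bound[of d z x] by auto
  have c: "\<bar>psi z (fst x)\<bar> \<le> 1" by (rule psi_bound[OF z])
  have "\<bar>gg d z x\<bar> = \<bar>chi d x\<bar> * \<bar>1 - phi d z x\<bar> * \<bar>psi z (fst x)\<bar>"
    unfolding gg_def by (simp add: abs_mult)
  also have "\<dots> \<le> 1 * 1 * 1" using a b c by (intro mult_mono) auto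
  finally show ?thesis by simp
qed

lemma circ_norm: "x \<in> circ \<times> UNIV \<Longrightarrow> norm (fst x) = 1"
  unfolding circ_def by auto

lemma FF_conv:
  assumes P: "\<And>n. prob_TR (\<mu>s n)" "prob_TR \<mu>" and N: "narrow_conv \<mu>s \<mu>"
    and z: "z \<in> circ" and z0: "measure \<mu> ({z} \<times> UNIV) = 0"
  shows "(\<lambda>n. integral\<^sup>L (\<mu>s n) (FF z)) \<longlonglongrightarrow> integral\<^sup>L \<mu> (FF z)"
proof -
  have nz: "norm z = 1" using z unfolding circ_def by simp
  show ?thesis
  proof (rule conv_of_approx[OF P N FF_meas[OF nz] FF_bound])
    fix e :: real assume e: "e > 0"
    obtain d where d: "0 < d" "d \<le> 1" and sm: "integral\<^sup>L \<mu> (phi d z) < e"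
      using phi_int_small[OF P(2) z0 e] by blast
    have le: "\<bar>FF z x - gg d z x\<bar> \<le> phi d z x" if x: "x \<in> circ \<times> UNIV" for x
    proof -
      have n1: "norm (fst x) = 1" by (rule circ_norm[OF x])
      then have w0: "fst x \<noteq> 0" by auto
      have "chi d x = 1" unfolding chi_def using n1 by simp
      then have "gg d z x = (1 - phi d z x) * psi z (fst x)" unfolding gg_def by simp
      moreover have "FF z x = psi z (fst x)" unfolding FF_def using psi_eq[OF nz w0] .
      ultimately have "FF z x - gg d z x = phi d z x * psi z (fst x)" by (simp add: algebra_simps)
      then have "\<bar>FF z x - gg d z x\<bar> = phi d z x * \<bar>psi z (fst x)\<bar>"
        using phi_bound(1)[of d z x] by (simp add: abs_mult)
      also have "\<dots> \<le> phi d z x * 1"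
        by (rule mult_left_mono[OF psi_bound[OF nz] phi_bound(1)])
      finally show ?thesis by simp
    qed
    have bg: "bounded (range (gg d z))"
      unfolding bounded_iff using gg_bound[OF nz d(1)] by auto
    have bp: "bounded (range (phi d z))"
      unfolding bounded_iff using phi_bound[of d z] by (intro exI[of _ 1]) auto
    show "\<exists>g ph. continuous_on UNIV g \<and> bounded (range g) \<and>
        continuous_on UNIV ph \<and> bounded (range ph) \<and>
        (\<forall>x\<in>circ \<times> UNIV. \<bar>FF z x - g x\<bar> \<le> ph x) \<and> integral\<^sup>L \<mu> ph < e"
      using gg_cont[OF d nz] phi_cont[of d z] d bg bp le sm by (intro exI[of _ "gg d z"] exI[of _ "phi d z"]) auto
  qed
qed

lemma Pfield_FF: "Pfield K M z \<Omega> = \<Omega> - K * integral\<^sup>L M (FF z)"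
proof -
  have "(\<lambda>x. indicator {x. fst x \<noteq> z} x *\<^sub>R hker (Arg z - Arg (fst x))) = FF z"
  proof
    fix x :: "complex \<times> real"
    show "indicator {x. fst x \<noteq> z} x *\<^sub>R hker (Arg z - Arg (fst x)) = FF z x"
      by (cases "fst x = z") (simp_all add: FF_def indicator_def hker_zero)
  qed
  then show ?thesis unfolding Pfield_def set_lebesgue_integral_def by simp
qed

lemma V_diff:
  assumes "norm z = 1"
  shows "norm (Vfield K M z \<Omega> - Vfield K N z \<Omega>) = \<bar>K\<bar> * \<bar>integral\<^sup>L M (FF z) - integral\<^sup>L N (FF z)\<bar>"
proof -
  have "Vfield K M z \<Omega> - Vfield K N z \<Omega> =
      (complex_of_real (K * (integral\<^sup>L N (FF z) - integral\<^sup>L M (FF z))) * (\<i> * z), 0)"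
    unfolding Vfield_def Pfield_FF by (simp add: algebra_simps)
  then show ?thesis using assms by (simp add: norm_mult abs_mult abs_minus_commute flip: of_real_diff)
qed

lemma part1:
  assumes "K > 0" and P: "\<And>n. prob_TR (\<mu>s n)" "prob_TR \<mu>" and N: "narrow_conv \<mu>s \<mu>"
    and z: "z \<in> circ" and z0: "measure \<mu> ({z} \<times> UNIV) = 0"
  shows "(\<lambda>n. SUP \<Omega>. norm (Vfield K (\<mu>s n) z \<Omega> - Vfield K \<mu> z \<Omega>)) \<longlonglongrightarrow> 0"
proof -
  have nz: "norm z = 1" using z unfolding circ_def by simp
  have eq: "(SUP \<Omega>. norm (Vfield K (\<mu>s n) z \<Omega> - Vfield K \<mu> z \<Omega>)) =
      \<bar>K\<bar> * \<bar>integral\<^sup>L (\<mu>s n) (FF z) - integral\<^sup>L \<mu> (FF z)\<bar>" for n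
    unfolding V_diff[OF nz] by simp
  have "(\<lambda>n. integral\<^sup>L (\<mu>s n) (FF z) - integral\<^sup>L \<mu> (FF z)) \<longlonglongrightarrow> 0"
    using FF_conv[OF P N z z0] by (simp add: LIM_zero)
  then have "(\<lambda>n. \<bar>K\<bar> * \<bar>integral\<^sup>L (\<mu>s n) (FF z) - integral\<^sup>L \<mu> (FF z)\<bar>) \<longlonglongrightarrow> 0"
    by (intro tendsto_mult_right_zero tendsto_rabs_zero)
  then show ?thesis unfolding eq .
qed

lemma atoms_countable:
  assumes M: "prob_TR \<mu>"
  shows "countable {z. measure \<mu> ({z} \<times> UNIV) \<noteq> 0}"
proof -
  have fm: "(fst :: complex \<times> real \<Rightarrow> complex) \<in> borel_measurable \<mu>"
    by (intro prob_TR_D(5)[OF M] borel_measurable_continuous_onI continuous_intros)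
  interpret p: prob_space "distr \<mu> borel fst"
    using prob_TR_D(1)[OF M] fm by (intro prob_space.prob_space_distr) auto
  have "measure (distr \<mu> borel fst) {z} = measure \<mu> ({z} \<times> UNIV)" for z
  proof -
    have "measure (distr \<mu> borel fst) {z} = measure \<mu> (fst -` {z} \<inter> space \<mu>)"
      by (rule measure_distr[OF fm]) simp
    also have "fst -` {z} \<inter> space \<mu> = {z} \<times> UNIV" using prob_TR_D(3)[OF M] by auto
    finally show ?thesis .
  qed
  then show ?thesis using p.countable_support by simp
qed

lemma cis_eq_Arg: assumes "cis t = z" shows "\<exists>k::int. t = Arg z + 2 * pi * of_int k"
proof -
  have z0: "z \<noteq> 0" using assms by auto
  have "cis (Arg z) = z" using cis_Arg[OF z0] assms by (auto simp: sgn_div_norm)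
  then have "exp (\<i> * complex_of_real t) = exp (\<i> * complex_of_real (Arg z))"
    using assms by (simp add: cis_conv_exp)
  then obtain n :: int where "\<i> * complex_of_real t = \<i> * complex_of_real (Arg z) + (of_int (2 * n) * pi) * \<i>"
    using exp_eq by blast
  then have "Im (\<i> * complex_of_real t) = Im (\<i> * complex_of_real (Arg z) + (of_int (2 * n) * pi) * \<i>)"
    by simp
  then have "t = Arg z + 2 * pi * of_int n" by simp
  then show ?thesis by blast
qed

lemma cis_preimage_countable:
  assumes "countable A" shows "countable {t. cis t \<in> A}"
proof -
  have "{t. cis t \<in> A} \<subseteq> (\<lambda>(z, k::int). Arg z + 2 * pi * of_int k) ` (A \<times> UNIV)"
  proof
    fix t assume "t \<in> {t. cis t \<in> A}"
    then have a: "cis t \<in> A" by simp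
    obtain k :: int where "t = Arg (cis t) + 2 * pi * of_int k" using cis_eq_Arg[of t "cis t"] by blast
    then show "t \<in> (\<lambda>(z, k::int). Arg z + 2 * pi * of_int k) ` (A \<times> UNIV)"
      using a by force
  qed
  moreover have "countable ((\<lambda>(z, k::int). Arg z + 2 * pi * of_int k) ` (A \<times> UNIV))"
    using assms by simp
  ultimately show ?thesis using countable_subset by blast
qed

theorem mainTheorem18:
  fixes K :: real and \<mu>s :: "nat \<Rightarrow> (complex \<times> real) measure" and \<mu> :: "(complex \<times> real) measure"
  assumes "K > 0"
    and "\<And>n. prob_TR (\<mu>s n)" and "prob_TR \<mu>"
    and "narrow_conv \<mu>s \<mu>"
  shows "(\<forall>z \<in> circ. measure \<mu> ({z} \<times> UNIV) = 0 \<longrightarrow>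
            (\<lambda>n. SUP \<Omega>. norm (Vfield K (\<mu>s n) z \<Omega> - Vfield K \<mu> z \<Omega>)) \<longlonglongrightarrow> 0)
       \<and> (AE \<theta> in lborel.
            (\<lambda>n. SUP \<Omega>. norm (Vfield K (\<mu>s n) (cis \<theta>) \<Omega> - Vfield K \<mu> (cis \<theta>) \<Omega>)) \<longlonglongrightarrow> 0)"
proof
  show P1: "\<forall>z \<in> circ. measure \<mu> ({z} \<times> UNIV) = 0 \<longrightarrow>
            (\<lambda>n. SUP \<Omega>. norm (Vfield K (\<mu>s n) z \<Omega> - Vfield K \<mu> z \<Omega>)) \<longlonglongrightarrow> 0"
    using part1[OF assms] by blast
  define B where "B = {t. cis t \<in> {z. measure \<mu> ({z} \<times> UNIV) \<noteq> 0}}"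
  have "countable B" unfolding B_def by (intro cis_preimage_countable atoms_countable assms(3))
  then have nB: "B \<in> null_sets lborel" by (rule countable_imp_null_set_lborel)
  show "AE \<theta> in lborel.
            (\<lambda>n. SUP \<Omega>. norm (Vfield K (\<mu>s n) (cis \<theta>) \<Omega> - Vfield K \<mu> (cis \<theta>) \<Omega>)) \<longlonglongrightarrow> 0"
  proof (rule AE_I'[OF nB], rule subsetI)
    fix t assume "t \<in> {t \<in> space lborel. \<not> (\<lambda>n. SUP \<Omega>. norm (Vfield K (\<mu>s n) (cis t) \<Omega> - Vfield K \<mu> (cis t) \<Omega>)) \<longlonglongrightarrow> 0}"
    then have nc: "\<not> (\<lambda>n. SUP \<Omega>. norm (Vfield K (\<mu>s n) (cis t) \<Omega> - Vfield K \<mu> (cis t) \<Omega>)) \<longlonglongrightarrow> 0" by simp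
    have "cis t \<in> circ" unfolding circ_def by simp
    then show "t \<in> B" using P1 nc unfolding B_def by auto
  qed
qed

end
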